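(* Let $k$ be a field and $A$ a finite-dimensional monomial algebra with two blocks $A_1$ and $A_2$. Let $B$ be the algebra obtained from $A$ by gluing idempotents (vertices) $e_1\in A_1$ and $e_n\in A_2$. Then the radical embedding $B\hookrightarrow A$ restricts to a radical embedding $Z(B)\hookrightarrow Z(A)$. In particular $\dim_kZ(A)=\dim_kZ(B)+1$.
   Context: A monomial algebra is $A=kQ_A/I_A$ with $Q_A$ a finite quiver with vertices $e_1,\dots,e_n$ and $I_A$ an admissible ideal generated by paths. Gluing $e_1,e_n$ (assumed non-isolated): $B$ is the subalgebra of $A$ generated by $e_1+e_n$, $e_2,\dots,e_{n-1}$ and all arrows; $B\cong kQ_B/I_B$ where $Q_B$ is $Q_A$ with $e_1,e_n$ identified and $I_B$ is generated by $I_A$ and all newly formed length-2 paths through the identified vertex. A radical embedding is an algebra monomorphism $\phi:B\to A$ with $\phi(\mathrm{rad}\,B)=\mathrm{rad}\,A$. $Z(\cdot)$ denotes the center. *)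

theory Defs
  imports Complex_Main "HOL-Library.Sublist" "HOL-Library.Function_Algebras"
begin

text \<open>A finite quiver: vertex set V, arrow set Ar, source s, target t.
  A path is a pair (start vertex, list of arrows), composed left to right.
  The trivial path (v, []) is the idempotent e_v.\<close>

definition valid_path :: "'v set \<Rightarrow> 'a set \<Rightarrow> ('a \<Rightarrow> 'v) \<Rightarrow> ('a \<Rightarrow> 'v) \<Rightarrow> 'v \<times> 'a list \<Rightarrow> bool" where
  "valid_path V Ar s t p \<longleftrightarrow> fst p \<in> V \<and> set (snd p) \<subseteq> Ar
     \<and> (snd p \<noteq> [] \<longrightarrow> s (hd (snd p)) = fst p)
     \<and> (\<forall>i. Suc i < length (snd p) \<longrightarrow> t (snd p ! i) = s (snd p ! Suc i))"

definition ptgt :: "('a \<Rightarrow> 'v) \<Rightarrow> 'v \<times> 'a list \<Rightarrow> 'v" where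
  "ptgt t p = (if snd p = [] then fst p else t (last (snd p)))"

definition pcat :: "('a \<Rightarrow> 'v) \<Rightarrow> 'v \<times> 'a list \<Rightarrow> 'v \<times> 'a list \<Rightarrow> ('v \<times> 'a list) option" where
  "pcat t q r = (if ptgt t q = fst r then Some (fst q, snd q @ snd r) else None)"

text \<open>Monomial relations R (arrow words of length \<ge> 2); the nonzero paths of kQ/I,
  which form a k-basis of the monomial algebra.\<close>
definition NP :: "'v set \<Rightarrow> 'a set \<Rightarrow> ('a \<Rightarrow> 'v) \<Rightarrow> ('a \<Rightarrow> 'v) \<Rightarrow> 'a list set \<Rightarrow> ('v \<times> 'a list) set" where
  "NP V Ar s t R = {p. valid_path V Ar s t p \<and> \<not> (\<exists>r\<in>R. sublist r (snd p))}"

text \<open>Elements of the monomial algebra A = kQ/I: k-linear combinations of nonzero paths P.\<close>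
definition algA :: "('v \<times> 'a list) set \<Rightarrow> (('v \<times> 'a list) \<Rightarrow> 'k::field) set" where
  "algA P = {f. \<forall>p. p \<notin> P \<longrightarrow> f p = 0}"

definition amult :: "('v \<times> 'a list) set \<Rightarrow> ('a \<Rightarrow> 'v) \<Rightarrow> (('v \<times> 'a list) \<Rightarrow> 'k::field)
    \<Rightarrow> (('v \<times> 'a list) \<Rightarrow> 'k) \<Rightarrow> (('v \<times> 'a list) \<Rightarrow> 'k)" where
  "amult P t f g = (\<lambda>p. if p \<in> P then
       (\<Sum>x\<in>{x. fst x \<in> P \<and> snd x \<in> P \<and> pcat t (fst x) (snd x) = Some p}. f (fst x) * g (snd x))
     else 0)"

definition aunit :: "('v \<times> 'a list) set \<Rightarrow> (('v \<times> 'a list) \<Rightarrow> 'k::field)" where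
  "aunit P = (\<lambda>p. if p \<in> P \<and> snd p = [] then 1 else 0)"

definition vert_elt :: "'v \<Rightarrow> (('v \<times> 'a list) \<Rightarrow> 'k::field)" where
  "vert_elt v = (\<lambda>p. if p = (v, []) then 1 else 0)"

definition arrow_elt :: "('a \<Rightarrow> 'v) \<Rightarrow> 'a \<Rightarrow> (('v \<times> 'a list) \<Rightarrow> 'k::field)" where
  "arrow_elt s a = (\<lambda>p. if p = (s a, [a]) then 1 else 0)"

definition gen_subalg :: "('v \<times> 'a list) set \<Rightarrow> ('a \<Rightarrow> 'v) \<Rightarrow> (('v \<times> 'a list) \<Rightarrow> 'k::field) set
    \<Rightarrow> (('v \<times> 'a list) \<Rightarrow> 'k) set" where
  "gen_subalg P t G = \<Inter> {S. S \<subseteq> algA P \<and> G \<subseteq> S \<and> aunit P \<in> S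
      \<and> (\<forall>x\<in>S. \<forall>y\<in>S. (\<lambda>p. x p + y p) \<in> S \<and> amult P t x y \<in> S)
      \<and> (\<forall>c x. x \<in> S \<longrightarrow> (\<lambda>p. c * x p) \<in> S)}"

definition center :: "('v \<times> 'a list) set \<Rightarrow> ('a \<Rightarrow> 'v) \<Rightarrow> (('v \<times> 'a list) \<Rightarrow> 'k::field) set
    \<Rightarrow> (('v \<times> 'a list) \<Rightarrow> 'k) set" where
  "center P t S = {z \<in> S. \<forall>x\<in>S. amult P t z x = amult P t x z}"

definition left_ideal :: "('v \<times> 'a list) set \<Rightarrow> ('a \<Rightarrow> 'v) \<Rightarrow> (('v \<times> 'a list) \<Rightarrow> 'k::field) set
    \<Rightarrow> (('v \<times> 'a list) \<Rightarrow> 'k) set \<Rightarrow> bool" where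
  "left_ideal P t S L \<longleftrightarrow> L \<subseteq> S \<and> (\<lambda>p. 0) \<in> L
     \<and> (\<forall>x\<in>L. \<forall>y\<in>L. (\<lambda>p. x p + y p) \<in> L) \<and> (\<forall>x\<in>L. (\<lambda>p. - x p) \<in> L)
     \<and> (\<forall>x\<in>S. \<forall>y\<in>L. amult P t x y \<in> L)"

definition max_left_ideal :: "('v \<times> 'a list) set \<Rightarrow> ('a \<Rightarrow> 'v) \<Rightarrow> (('v \<times> 'a list) \<Rightarrow> 'k::field) set
    \<Rightarrow> (('v \<times> 'a list) \<Rightarrow> 'k) set \<Rightarrow> bool" where
  "max_left_ideal P t S L \<longleftrightarrow> left_ideal P t S L \<and> L \<noteq> S
     \<and> (\<forall>L'. left_ideal P t S L' \<and> L \<subseteq> L' \<longrightarrow> L' = L \<or> L' = S)"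

definition jrad :: "('v \<times> 'a list) set \<Rightarrow> ('a \<Rightarrow> 'v) \<Rightarrow> (('v \<times> 'a list) \<Rightarrow> 'k::field) set
    \<Rightarrow> (('v \<times> 'a list) \<Rightarrow> 'k) set" where
  "jrad P t S = {x \<in> S. \<forall>L. max_left_ideal P t S L \<longrightarrow> x \<in> L}"

definition kdim :: "(('v \<times> 'a list) \<Rightarrow> 'k::field) set \<Rightarrow> nat" where
  "kdim S = vector_space.dim (\<lambda>c (f :: ('v \<times> 'a list) \<Rightarrow> 'k). \<lambda>p. c * f p) S"

definition qconn :: "'v set \<Rightarrow> 'a set \<Rightarrow> ('a \<Rightarrow> 'v) \<Rightarrow> ('a \<Rightarrow> 'v) \<Rightarrow> ('v \<times> 'v) set" where
  "qconn V Ar s t = ({(u, w). \<exists>a\<in>Ar. (s a = u \<and> t a = w) \<or> (s a = w \<and> t a = u)})\<^sup>*"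

end

theory Submission
  imports Defs
begin



locale mq =
  fixes V :: "'v set" and Ar :: "'a set" and s t :: "'a \<Rightarrow> 'v" and R :: "'a list set"
  assumes finV: "finite V" and finAr: "finite Ar"
    and quiver: "\<forall>a\<in>Ar. s a \<in> V \<and> t a \<in> V"
    and rels: "\<forall>r\<in>R. 2 \<le> length r \<and> valid_path V Ar s t (s (hd r), r)"
    and admissible: "\<exists>N. \<forall>p. valid_path V Ar s t p \<and> N \<le> length (snd p) \<longrightarrow> (\<exists>r\<in>R. sublist r (snd p))"
begin

abbreviation "P \<equiv> NP V Ar s t R"

lemma P_triv: "v \<in> V \<Longrightarrow> (v, []) \<in> P"
  using rels by (force simp: NP_def valid_path_def)

lemma P_arrow: "a \<in> Ar \<Longrightarrow> (s a, [a]) \<in> P"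
proof -
  assume a: "a \<in> Ar"
  have "\<not> sublist r [a]" if "r \<in> R" for r
    using rels that sublist_length_le[of r "[a]"] by fastforce
  then show ?thesis using a quiver by (auto simp: NP_def valid_path_def)
qed

lemma P_fst: "p \<in> P \<Longrightarrow> fst p \<in> V"
  by (simp add: NP_def valid_path_def)

lemma P_set: "p \<in> P \<Longrightarrow> set (snd p) \<subseteq> Ar"
  by (simp add: NP_def valid_path_def)

lemma P_prefix: assumes "(v, w1 @ w2) \<in> P" shows "(v, w1) \<in> P"
proof -
  from assms have vp: "valid_path V Ar s t (v, w1 @ w2)" and nr: "\<not> (\<exists>r\<in>R. sublist r (w1 @ w2))"
    by (auto simp: NP_def)
  have "valid_path V Ar s t (v, w1)"
    unfolding valid_path_def
  proof (intro conjI allI impI)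
    show "fst (v, w1) \<in> V" "set (snd (v, w1)) \<subseteq> Ar" using vp by (auto simp: valid_path_def)
    show "s (hd (snd (v, w1))) = fst (v, w1)" if "snd (v, w1) \<noteq> []"
      using vp that by (simp add: valid_path_def)
    fix i assume i: "Suc i < length (snd (v, w1))"
    have "t ((w1@w2) ! i) = s ((w1@w2) ! Suc i)"
      using vp i unfolding valid_path_def by simp
    then show "t (snd (v, w1) ! i) = s (snd (v, w1) ! Suc i)"
      using i by (simp add: nth_append)
  qed
  moreover have "\<not> (\<exists>r\<in>R. sublist r w1)"
    using nr by (meson sublist_append_rightI sublist_order.order.trans)
  ultimately show ?thesis by (simp add: NP_def)
qed

lemma ptgt_V: "valid_path V Ar s t p \<Longrightarrow> ptgt t p \<in> V"
  using quiver by (auto simp: valid_path_def ptgt_def) (meson last_in_set subsetD)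

lemma P_ptgt: "p \<in> P \<Longrightarrow> ptgt t p \<in> V"
  by (simp add: NP_def ptgt_V)

lemma P_suffix: assumes "(v, w1 @ w2) \<in> P" shows "(ptgt t (v, w1), w2) \<in> P"
proof -
  from assms have vp: "valid_path V Ar s t (v, w1 @ w2)" and nr: "\<not> (\<exists>r\<in>R. sublist r (w1 @ w2))"
    by (auto simp: NP_def)
  have pre: "valid_path V Ar s t (v, w1)" using P_prefix[OF assms] by (simp add: NP_def)
  have cons: "\<And>i. Suc i < length (w1 @ w2) \<Longrightarrow> t ((w1@w2) ! i) = s ((w1@w2) ! Suc i)"
    using vp by (simp add: valid_path_def)
  have hd: "w2 \<noteq> [] \<Longrightarrow> s (hd w2) = ptgt t (v, w1)"
  proof (cases "w1 = []")
    case True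
    then show "w2 \<noteq> [] \<Longrightarrow> ?thesis" using vp by (simp add: valid_path_def ptgt_def)
  next
    case False
    assume "w2 \<noteq> []"
    have "t ((w1@w2) ! (length w1 - 1)) = s ((w1@w2) ! Suc (length w1 - 1))"
      using cons[of "length w1 - 1"] False \<open>w2 \<noteq> []\<close> by simp
    then show ?thesis using False \<open>w2 \<noteq> []\<close>
      by (simp add: ptgt_def nth_append last_conv_nth hd_conv_nth)
  qed
  have "valid_path V Ar s t (ptgt t (v, w1), w2)"
    unfolding valid_path_def
  proof (intro conjI allI impI)
    show "fst (ptgt t (v, w1), w2) \<in> V" using ptgt_V[OF pre] by simp
    show "set (snd (ptgt t (v, w1), w2)) \<subseteq> Ar" using vp by (simp add: valid_path_def)
    show "s (hd (snd (ptgt t (v, w1), w2))) = fst (ptgt t (v, w1), w2)"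
      if "snd (ptgt t (v, w1), w2) \<noteq> []" using hd that by simp
    fix i assume "Suc i < length (snd (ptgt t (v, w1), w2))"
    then show "t (snd (ptgt t (v, w1), w2) ! i) = s (snd (ptgt t (v, w1), w2) ! Suc i)"
      using cons[of "length w1 + i"] by (simp add: nth_append)
  qed
  moreover have "\<not> (\<exists>r\<in>R. sublist r w2)"
    using nr by (meson sublist_append_leftI sublist_order.order.trans)
  ultimately show ?thesis by (simp add: NP_def)
qed

lemma bound: "\<exists>Nb. \<forall>p\<in>P. length (snd p) < Nb"
proof -
  obtain N where N: "\<forall>p. valid_path V Ar s t p \<and> N \<le> length (snd p) \<longrightarrow> (\<exists>r\<in>R. sublist r (snd p))"
    using admissible by blast
  have "\<forall>p\<in>P. length (snd p) < N"
  proof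
    fix p assume "p \<in> P"
    then have "valid_path V Ar s t p" "\<not> (\<exists>r\<in>R. sublist r (snd p))" by (auto simp: NP_def)
    then show "length (snd p) < N" using N by (meson not_le)
  qed
  then show ?thesis by blast
qed

lemma finite_P: "finite P"
proof -
  obtain Nb where Nb: "\<forall>p\<in>P. length (snd p) < Nb" using bound by blast
  have "P \<subseteq> V \<times> {w. set w \<subseteq> Ar \<and> length w \<le> Nb}"
  proof
    fix p assume p: "p \<in> P"
    then show "p \<in> V \<times> {w. set w \<subseteq> Ar \<and> length w \<le> Nb}"
      using Nb P_fst[OF p] P_set[OF p] by (cases p) (auto intro: less_imp_le)
  qed
  moreover have "finite (V \<times> {w. set w \<subseteq> Ar \<and> length w \<le> Nb})"
    using finV finAr by (simp add: finite_lists_length_le)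
  ultimately show ?thesis by (rule finite_subset)
qed

lemma pcat_Some: "pcat t q r = Some p \<longleftrightarrow> ptgt t q = fst r \<and> p = (fst q, snd q @ snd r)"
  by (auto simp: pcat_def)

lemma ptgt_cat: "ptgt t q = fst r \<Longrightarrow> ptgt t (fst q, snd q @ snd r) = ptgt t r"
  by (auto simp: ptgt_def)

end



context mq begin

lemma am_sum: "p \<in> P \<Longrightarrow> amult P t f g p =
   (\<Sum>q\<in>P. \<Sum>r\<in>P. if pcat t q r = Some p then f q * g r else 0)"
proof -
  assume p: "p \<in> P"
  have eq: "{x. fst x \<in> P \<and> snd x \<in> P \<and> pcat t (fst x) (snd x) = Some p}
      = {x \<in> P \<times> P. pcat t (fst x) (snd x) = Some p}" by auto
  have "amult P t f g p = (\<Sum>x\<in>{x \<in> P \<times> P. pcat t (fst x) (snd x) = Some p}. f (fst x) * g (snd x))"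
    using p by (simp add: amult_def eq)
  also have "\<dots> = (\<Sum>x\<in>P \<times> P. if pcat t (fst x) (snd x) = Some p then f (fst x) * g (snd x) else 0)"
    using finite_P by (simp add: sum.inter_filter)
  also have "\<dots> = (\<Sum>q\<in>P. \<Sum>r\<in>P. if pcat t q r = Some p then f q * g r else 0)"
    by (simp add: sum.cartesian_product split_def)
  finally show ?thesis .
qed

lemma am_out: "p \<notin> P \<Longrightarrow> amult P t f g p = 0"
  by (simp add: amult_def)

definition T3 where "T3 p q1 q2 r \<longleftrightarrow> ptgt t q1 = fst q2 \<and> ptgt t q2 = fst r
   \<and> p = (fst q1, snd q1 @ snd q2 @ snd r)"

lemma inner_x:
  assumes p: "p \<in> P"
  shows "(\<Sum>x\<in>P. if pcat t x r = Some p \<and> pcat t q1 q2 = Some x then F else 0)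
     = (if T3 p q1 q2 r then F else (0::'k::field))"
proof -
  let ?x0 = "(fst q1, snd q1 @ snd q2)"
  have "(\<Sum>x\<in>P. if pcat t x r = Some p \<and> pcat t q1 q2 = Some x then F else 0)
     = (\<Sum>x\<in>P. if x = ?x0 then (if ptgt t q1 = fst q2 \<and> pcat t ?x0 r = Some p then F else 0) else 0)"
    by (rule sum.cong) (auto simp: pcat_Some)
  also have "\<dots> = (if ?x0 \<in> P then (if ptgt t q1 = fst q2 \<and> pcat t ?x0 r = Some p then F else 0) else 0)"
    using finite_P by (simp add: sum.delta)
  also have "\<dots> = (if T3 p q1 q2 r then F else 0)"
  proof (cases "T3 p q1 q2 r")
    case True
    then have "(fst q1, (snd q1 @ snd q2) @ snd r) \<in> P" using p by (simp add: T3_def)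
    then have "?x0 \<in> P" by (rule P_prefix)
    then show ?thesis using True by (simp add: T3_def pcat_Some ptgt_cat)
  next
    case False
    then show ?thesis by (auto simp: T3_def pcat_Some ptgt_cat)
  qed
  finally show ?thesis .
qed

lemma inner_y:
  assumes p: "p \<in> P"
  shows "(\<Sum>y\<in>P. if pcat t q1 y = Some p \<and> pcat t q2 r = Some y then F else 0)
     = (if T3 p q1 q2 r then F else (0::'k::field))"
proof -
  let ?y0 = "(fst q2, snd q2 @ snd r)"
  have "(\<Sum>y\<in>P. if pcat t q1 y = Some p \<and> pcat t q2 r = Some y then F else 0)
     = (\<Sum>y\<in>P. if y = ?y0 then (if ptgt t q2 = fst r \<and> pcat t q1 ?y0 = Some p then F else 0) else 0)"
    by (rule sum.cong) (auto simp: pcat_Some)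
  also have "\<dots> = (if ?y0 \<in> P then (if ptgt t q2 = fst r \<and> pcat t q1 ?y0 = Some p then F else 0) else 0)"
    using finite_P by (simp add: sum.delta)
  also have "\<dots> = (if T3 p q1 q2 r then F else 0)"
  proof (cases "T3 p q1 q2 r")
    case True
    then have "(fst q1, snd q1 @ (snd q2 @ snd r)) \<in> P" using p by (simp add: T3_def)
    then have "(ptgt t (fst q1, snd q1), snd q2 @ snd r) \<in> P" by (rule P_suffix)
    then have "?y0 \<in> P" using True by (simp add: T3_def)
    then show ?thesis using True by (simp add: T3_def pcat_Some)
  next
    case False
    then show ?thesis by (auto simp: T3_def pcat_Some)
  qed
  finally show ?thesis .
qed

lemma aux1: "(if c then (\<Sum>q1\<in>P. \<Sum>q2\<in>P. if d q1 q2 then a q1 q2 else 0) * (h::'k::field) else 0)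
  = (\<Sum>q1\<in>P. \<Sum>q2\<in>P. if c \<and> d q1 q2 then a q1 q2 * h else 0)"
proof (cases c)
  case True
  have "(\<Sum>q1\<in>P. \<Sum>q2\<in>P. if d q1 q2 then a q1 q2 else 0) * h
      = (\<Sum>q1\<in>P. \<Sum>q2\<in>P. (if d q1 q2 then a q1 q2 else 0) * h)"
    by (simp add: sum_distrib_right)
  also have "\<dots> = (\<Sum>q1\<in>P. \<Sum>q2\<in>P. if d q1 q2 then a q1 q2 * h else 0)"
    by (intro sum.cong refl) simp
  finally show ?thesis using True by simp
qed simp

lemma aux2: "(if c then (f::'k::field) * (\<Sum>q2\<in>P. \<Sum>r\<in>P. if d q2 r then a q2 r else 0) else 0)
  = (\<Sum>q2\<in>P. \<Sum>r\<in>P. if c \<and> d q2 r then f * a q2 r else 0)"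
proof (cases c)
  case True
  have "f * (\<Sum>q2\<in>P. \<Sum>r\<in>P. if d q2 r then a q2 r else 0)
      = (\<Sum>q2\<in>P. \<Sum>r\<in>P. f * (if d q2 r then a q2 r else 0))"
    by (simp add: sum_distrib_left)
  also have "\<dots> = (\<Sum>q2\<in>P. \<Sum>r\<in>P. if d q2 r then f * a q2 r else 0)"
    by (intro sum.cong refl) simp
  finally show ?thesis using True by simp
qed simp

lemma assoc: "amult P t (amult P t f g) h = amult P t f (amult P t g h)"
proof (rule ext)
  fix p
  show "amult P t (amult P t f g) h p = amult P t f (amult P t g h) p"
  proof (cases "p \<in> P")
    case False then show ?thesis by (simp add: am_out)
  next
    case p: True
    let ?F = "\<lambda>q1 q2 r. f q1 * g q2 * h r"
    have "amult P t (amult P t f g) h p =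
       (\<Sum>x\<in>P. \<Sum>r\<in>P. if pcat t x r = Some p then amult P t f g x * h r else 0)"
      using p by (rule am_sum)
    also have "\<dots> = (\<Sum>x\<in>P. \<Sum>r\<in>P. \<Sum>q1\<in>P. \<Sum>q2\<in>P.
        if pcat t x r = Some p \<and> pcat t q1 q2 = Some x then ?F q1 q2 r else 0)"
    proof (intro sum.cong refl)
      fix x r assume x: "x \<in> P"
      show "(if pcat t x r = Some p then amult P t f g x * h r else 0) =
         (\<Sum>q1\<in>P. \<Sum>q2\<in>P. if pcat t x r = Some p \<and> pcat t q1 q2 = Some x then ?F q1 q2 r else 0)"
        unfolding am_sum[OF x] using aux1[of "pcat t x r = Some p" "\<lambda>q1 q2. pcat t q1 q2 = Some x" "\<lambda>q1 q2. f q1 * g q2" "h r"] by simp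
    qed
    also have "\<dots> = (\<Sum>r\<in>P. \<Sum>x\<in>P. \<Sum>q1\<in>P. \<Sum>q2\<in>P. if pcat t x r = Some p \<and> pcat t q1 q2 = Some x then ?F q1 q2 r else 0)"
      by (rule sum.swap)
    also have "\<dots> = (\<Sum>r\<in>P. \<Sum>q1\<in>P. \<Sum>x\<in>P. \<Sum>q2\<in>P. if pcat t x r = Some p \<and> pcat t q1 q2 = Some x then ?F q1 q2 r else 0)"
      by (rule sum.cong[OF refl], rule sum.swap)
    also have "\<dots> = (\<Sum>r\<in>P. \<Sum>q1\<in>P. \<Sum>q2\<in>P. \<Sum>x\<in>P. if pcat t x r = Some p \<and> pcat t q1 q2 = Some x then ?F q1 q2 r else 0)"
      by (rule sum.cong[OF refl], rule sum.cong[OF refl], rule sum.swap)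
    also have "\<dots> = (\<Sum>r\<in>P. \<Sum>q1\<in>P. \<Sum>q2\<in>P. if T3 p q1 q2 r then ?F q1 q2 r else 0)"
      by ((rule sum.cong[OF refl])+, rule inner_x[OF p])
    finally have L: "amult P t (amult P t f g) h p = (\<Sum>r\<in>P. \<Sum>q1\<in>P. \<Sum>q2\<in>P. if T3 p q1 q2 r then ?F q1 q2 r else 0)" .
    have "amult P t f (amult P t g h) p =
       (\<Sum>q1\<in>P. \<Sum>y\<in>P. if pcat t q1 y = Some p then f q1 * amult P t g h y else 0)"
      using p by (rule am_sum)
    also have "\<dots> = (\<Sum>q1\<in>P. \<Sum>y\<in>P. \<Sum>q2\<in>P. \<Sum>r\<in>P.
        if pcat t q1 y = Some p \<and> pcat t q2 r = Some y then ?F q1 q2 r else 0)"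
    proof (intro sum.cong refl)
      fix q1 y assume y: "y \<in> P"
      show "(if pcat t q1 y = Some p then f q1 * amult P t g h y else 0) =
         (\<Sum>q2\<in>P. \<Sum>r\<in>P. if pcat t q1 y = Some p \<and> pcat t q2 r = Some y then ?F q1 q2 r else 0)"
        unfolding am_sum[OF y] aux2[of "pcat t q1 y = Some p" "f q1" "\<lambda>q2 r. pcat t q2 r = Some y" "\<lambda>q2 r. g q2 * h r"] by (simp only: mult.assoc)
    qed
    also have "\<dots> = (\<Sum>q1\<in>P. \<Sum>q2\<in>P. \<Sum>y\<in>P. \<Sum>r\<in>P. if pcat t q1 y = Some p \<and> pcat t q2 r = Some y then ?F q1 q2 r else 0)"
      by (rule sum.cong[OF refl], rule sum.swap)
    also have "\<dots> = (\<Sum>q1\<in>P. \<Sum>q2\<in>P. \<Sum>r\<in>P. \<Sum>y\<in>P. if pcat t q1 y = Some p \<and> pcat t q2 r = Some y then ?F q1 q2 r else 0)"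
      by (rule sum.cong[OF refl], rule sum.cong[OF refl], rule sum.swap)
    also have "\<dots> = (\<Sum>q1\<in>P. \<Sum>q2\<in>P. \<Sum>r\<in>P. if T3 p q1 q2 r then ?F q1 q2 r else 0)"
      by ((rule sum.cong[OF refl])+, rule inner_y[OF p])
    also have "\<dots> = (\<Sum>q1\<in>P. \<Sum>r\<in>P. \<Sum>q2\<in>P. if T3 p q1 q2 r then ?F q1 q2 r else 0)"
      by (rule sum.cong[OF refl], rule sum.swap)
    also have "\<dots> = (\<Sum>r\<in>P. \<Sum>q1\<in>P. \<Sum>q2\<in>P. if T3 p q1 q2 r then ?F q1 q2 r else 0)"
      by (rule sum.swap)
    finally show ?thesis using L by simp
  qed
qed

end



definition delta :: "'x \<Rightarrow> 'x \<Rightarrow> 'k::field" where "delta q = (\<lambda>p. if p = q then 1 else 0)"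

context mq begin

lemma add_left: "amult P t (\<lambda>p. f p + g p) h = (\<lambda>p. amult P t f h p + amult P t g h p)"
  by (rule ext) (simp add: amult_def sum.distrib distrib_right)

lemma add_right: "amult P t h (\<lambda>p. f p + g p) = (\<lambda>p. amult P t h f p + amult P t h g p)"
  by (rule ext) (simp add: amult_def sum.distrib distrib_left)

lemma smult_left: "amult P t (\<lambda>p. c * f p) g = (\<lambda>p. c * amult P t f g p)"
  by (rule ext) (simp add: amult_def sum_distrib_left mult.assoc)

lemma smult_right: "amult P t g (\<lambda>p. c * f p) = (\<lambda>p. c * amult P t g f p)"
  by (rule ext) (simp add: amult_def sum_distrib_left mult.assoc mult.left_commute)

lemma sum_single2:
  assumes "a \<in> P" "b \<in> P"
  and "\<And>q r. q \<in> P \<Longrightarrow> r \<in> P \<Longrightarrow> G q r = (if r = b then (if q = a then c else 0) else (0::'k::field))"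
  shows "(\<Sum>q\<in>P. \<Sum>r\<in>P. G q r) = c"
proof -
  have "(\<Sum>q\<in>P. \<Sum>r\<in>P. G q r) = (\<Sum>q\<in>P. \<Sum>r\<in>P. if r = b then (if q = a then c else 0) else 0)"
    using assms(3) by (intro sum.cong refl) auto
  also have "\<dots> = (\<Sum>q\<in>P. if q = a then c else 0)"
    using finite_P assms(2) by (simp add: sum.delta)
  also have "\<dots> = c" using finite_P assms(1) by (simp add: sum.delta)
  finally show ?thesis .
qed

lemma diag_left:
  assumes d: "\<forall>q\<in>P. d q = (if snd q = [] then \<phi> (fst q) else 0)" and p: "p \<in> P"
  shows "amult P t d x p = \<phi> (fst p) * x p"
proof -
  have a: "(fst p, []) \<in> P" using P_triv P_fst[OF p] by blast
  show ?thesis unfolding am_sum[OF p]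
  proof (rule sum_single2[OF a p])
    fix q r assume q: "q \<in> P" and r: "r \<in> P"
    show "(if pcat t q r = Some p then d q * x r else 0) =
      (if r = p then if q = (fst p, []) then \<phi> (fst p) * x p else 0 else 0)"
    proof (cases "pcat t q r = Some p")
      case True
      then have e: "ptgt t q = fst r" "p = (fst q, snd q @ snd r)" by (auto simp: pcat_Some)
      show ?thesis
      proof (cases "snd q = []")
        case True
        then have "r = p" "q = (fst p, [])" using e by (auto simp: ptgt_def prod_eq_iff)
        then show ?thesis using d q True \<open>pcat t q r = Some p\<close> by simp
      next
        case False
        then have "q \<noteq> (fst p, [])" by auto
        then show ?thesis using d q False \<open>pcat t q r = Some p\<close> by simp
      qed
    next
      case False
      have "\<not> (r = p \<and> q = (fst p, []))"
      proof
        assume "r = p \<and> q = (fst p, [])"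
        then have "pcat t q r = Some p" by (simp add: pcat_Some ptgt_def)
        then show False using False by simp
      qed
      then show ?thesis using False by auto
    qed
  qed
qed

lemma diag_right:
  assumes d: "\<forall>q\<in>P. d q = (if snd q = [] then \<phi> (fst q) else 0)" and p: "p \<in> P"
  shows "amult P t x d p = x p * \<phi> (ptgt t p)"
proof -
  have a: "(ptgt t p, []) \<in> P" using P_triv P_ptgt[OF p] by blast
  show ?thesis unfolding am_sum[OF p]
  proof (rule sum_single2[OF p a])
    fix q r assume q: "q \<in> P" and r: "r \<in> P"
    show "(if pcat t q r = Some p then x q * d r else 0) =
      (if r = (ptgt t p, []) then if q = p then x p * \<phi> (ptgt t p) else 0 else 0)"
    proof (cases "pcat t q r = Some p")
      case True
      then have e: "ptgt t q = fst r" "p = (fst q, snd q @ snd r)" by (auto simp: pcat_Some)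
      show ?thesis
      proof (cases "snd r = []")
        case True
        have qp: "q = p" using e(2) True by simp
        have "r = (ptgt t p, [])" using e(1) True qp by (metis prod.collapse)
        note qp this
        then show ?thesis using d r True \<open>pcat t q r = Some p\<close> by simp
      next
        case False
        then have "r \<noteq> (ptgt t p, [])" by auto
        then show ?thesis using d r False \<open>pcat t q r = Some p\<close> by simp
      qed
    next
      case False
      have "\<not> (r = (ptgt t p, []) \<and> q = p)"
      proof
        assume "r = (ptgt t p, []) \<and> q = p"
        then have "pcat t q r = Some p" by (simp add: pcat_Some)
        then show False using False by simp
      qed
      then show ?thesis using False by auto
    qed
  qed
qed

lemma aunit_diag: "\<forall>q\<in>P. aunit P q = (if snd q = [] then (1::'k::field) else 0)"
  by (simp add: aunit_def)

lemma algA_out: "f \<in> algA P \<Longrightarrow> p \<notin> P \<Longrightarrow> f p = 0"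
  unfolding algA_def by (cases p) auto

lemma unit_left: "f \<in> algA P \<Longrightarrow> amult P t (aunit P) f = f"
proof (rule ext)
  fix p assume f: "f \<in> algA P"
  show "amult P t (aunit P) f p = f p"
    using diag_left[OF aunit_diag, of p f] am_out[of p] algA_out[OF f, of p] by (cases "p \<in> P") auto
qed

lemma unit_right: "f \<in> algA P \<Longrightarrow> amult P t f (aunit P) = f"
proof (rule ext)
  fix p assume f: "f \<in> algA P"
  show "amult P t f (aunit P) p = f p"
    using diag_right[OF aunit_diag, of p f] am_out[of p] algA_out[OF f, of p] by (cases "p \<in> P") auto
qed

lemma amult_algA: "amult P t f g \<in> algA P"
  by (simp add: algA_def am_out)

lemma vcoef: assumes v: "v \<in> V" shows "amult P t f g (v, []) = f (v, []) * g (v, [])"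
proof -
  have a: "(v, []) \<in> P" using P_triv v by blast
  show ?thesis unfolding am_sum[OF a]
  proof (rule sum_single2[OF a a])
    fix q r assume q: "q \<in> P" and r: "r \<in> P"
    show "(if pcat t q r = Some (v, []) then f q * g r else 0) =
      (if r = (v, []) then if q = (v, []) then f (v, []) * g (v, []) else 0 else 0)"
    proof (cases "pcat t q r = Some (v, [])")
      case True
      then have "q = (v, [])" "r = (v, [])" by (auto simp: pcat_Some ptgt_def prod_eq_iff)
      then show ?thesis using True by simp
    next
      case False
      have "\<not> (q = (v, []) \<and> r = (v, []))"
      proof
        assume "q = (v, []) \<and> r = (v, [])"
        then have "pcat t q r = Some (v, [])" by (simp add: pcat_Some ptgt_def)
        then show False using False by simp
      qed
      then show ?thesis using False by auto
    qed
  qed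
qed

lemma delta_mult:
  assumes pa: "(fst q, snd q @ [a]) \<in> P" and tg: "ptgt t q = s a"
  shows "amult P t (delta q) (delta (s a, [a])) = (delta (fst q, snd q @ [a]) :: _ \<Rightarrow> 'k::field)"
proof (rule ext)
  fix p
  show "amult P t (delta q) (delta (s a, [a])) p = (delta (fst q, snd q @ [a]) :: _ \<Rightarrow> 'k) p"
  proof (cases "p \<in> P")
    case False
    then show ?thesis using pa by (auto simp: am_out delta_def)
  next
    case p: True
    have q: "q \<in> P" using P_prefix[of "fst q" "snd q" "[a]"] pa by simp
    have a: "(s a, [a]) \<in> P" using P_suffix[of "fst q" "snd q" "[a]"] pa tg by (simp)
    show ?thesis unfolding am_sum[OF p]
    proof (rule sum_single2[OF q a])
      fix q' r assume "q' \<in> P" "r \<in> P"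
      show "(if pcat t q' r = Some p then delta q q' * delta (s a, [a]) r else 0) =
        (if r = (s a, [a]) then if q' = q then (delta (fst q, snd q @ [a]) :: _ \<Rightarrow> 'k) p else 0 else 0)"
        using tg by (cases r) (auto simp: pcat_Some delta_def)
    qed
  qed
qed

definition vanish :: "(('v \<times> 'a list) \<Rightarrow> 'k::field) \<Rightarrow> nat \<Rightarrow> bool" where
  "vanish f m \<longleftrightarrow> (\<forall>p. length (snd p) < m \<longrightarrow> f p = 0)"

lemma vanish_mult: "vanish f a \<Longrightarrow> vanish g b \<Longrightarrow> vanish (amult P t f g) (a + b)"
  unfolding vanish_def
proof (intro allI impI)
  fix p :: "'v \<times> 'a list" assume f: "\<forall>p. length (snd p) < a \<longrightarrow> f p = 0" and g: "\<forall>p. length (snd p) < b \<longrightarrow> g p = 0"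
    and l: "length (snd p) < a + b"
  show "amult P t f g p = 0"
  proof (cases "p \<in> P")
    case False then show ?thesis by (simp add: am_out)
  next
    case True
    show ?thesis unfolding am_sum[OF True]
    proof (intro sum.neutral ballI)
      fix q r
      show "(if pcat t q r = Some p then f q * g r else 0) = 0"
      proof (cases "pcat t q r = Some p")
        case True
        then have "length (snd p) = length (snd q) + length (snd r)" by (auto simp: pcat_Some)
        then have "length (snd q) < a \<or> length (snd r) < b" using l by linarith
        moreover have "length (snd q) < a \<Longrightarrow> f q = 0" using f by (cases q) auto
        moreover have "length (snd r) < b \<Longrightarrow> g r = 0" using g by (cases r) auto
        ultimately show ?thesis by auto
      qed simp
    qed
  qed
qed

end



fun pw :: "('v \<times> 'a list) set \<Rightarrow> ('a \<Rightarrow> 'v) \<Rightarrow> (('v \<times> 'a list) \<Rightarrow> 'k::field) \<Rightarrow> nat \<Rightarrow> (('v \<times> 'a list) \<Rightarrow> 'k)" where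
  "pw P t z 0 = aunit P"
| "pw P t z (Suc k) = amult P t (pw P t z k) z"

context mq begin

definition closedS :: "(('v \<times> 'a list) \<Rightarrow> 'k::field) set \<Rightarrow> bool" where
  "closedS S \<longleftrightarrow> S \<subseteq> algA P \<and> aunit P \<in> S
     \<and> (\<forall>x\<in>S. \<forall>y\<in>S. (\<lambda>p. x p + y p) \<in> S \<and> amult P t x y \<in> S)
     \<and> (\<forall>c x. x \<in> S \<longrightarrow> (\<lambda>p. c * x p) \<in> S)"

lemma aunit_algA: "aunit P \<in> algA P"
  by (simp add: algA_def aunit_def)

lemma closed_algA: "closedS (algA P)"
  unfolding closedS_def by (simp add: aunit_algA amult_algA) (simp add: algA_def)

lemma zero_left: "amult P t (\<lambda>p. 0) g = (\<lambda>p. 0)"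
  by (rule ext) (simp add: amult_def)

lemma zero_right: "amult P t g (\<lambda>p. 0) = (\<lambda>p. 0)"
  by (rule ext) (simp add: amult_def)


lemma cS_sub: "closedS S \<Longrightarrow> x \<in> S \<Longrightarrow> x \<in> algA P"
  unfolding closedS_def by blast

lemma cS_unit: "closedS S \<Longrightarrow> aunit P \<in> S"
  unfolding closedS_def by blast

lemma cS_add: "closedS S \<Longrightarrow> x \<in> S \<Longrightarrow> y \<in> S \<Longrightarrow> (\<lambda>p. x p + y p) \<in> S"
  unfolding closedS_def by blast

lemma cS_mult: "closedS S \<Longrightarrow> x \<in> S \<Longrightarrow> y \<in> S \<Longrightarrow> amult P t x y \<in> S"
  unfolding closedS_def by blast

lemma cS_smult: "closedS S \<Longrightarrow> x \<in> S \<Longrightarrow> (\<lambda>p. c * x p) \<in> S"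
  unfolding closedS_def by blast

lemma cS_zero: "closedS S \<Longrightarrow> (\<lambda>p. 0) \<in> S"
  using cS_smult[OF _ cS_unit, of S 0] by simp

lemma cS_neg: "closedS S \<Longrightarrow> x \<in> S \<Longrightarrow> (\<lambda>p. - x p) \<in> S"
  using cS_smult[of S x "-1"] by simp

lemma cS_diff: "closedS S \<Longrightarrow> x \<in> S \<Longrightarrow> y \<in> S \<Longrightarrow> (\<lambda>p. x p - y p) \<in> S"
  using cS_add[of S x "\<lambda>p. - y p"] cS_neg[of S y] by simp

lemma closed_center: assumes S: "closedS S" shows "closedS (center P t S)"
  unfolding closedS_def
proof (intro conjI ballI allI impI)
  show "center P t S \<subseteq> algA P" using S by (auto simp: center_def dest: cS_sub)
  show "aunit P \<in> center P t S" using S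
    by (auto simp: center_def cS_unit unit_left unit_right dest: cS_sub)
  fix x y assume x: "x \<in> center P t S" and y: "y \<in> center P t S"
  then have xS: "x \<in> S" and yS: "y \<in> S" and xc: "\<forall>w\<in>S. amult P t x w = amult P t w x"
    and yc: "\<forall>w\<in>S. amult P t y w = amult P t w y" by (auto simp: center_def)
  show "(\<lambda>p. x p + y p) \<in> center P t S"
    using xS yS xc yc S by (auto simp: center_def add_left add_right cS_add)
  show "amult P t x y \<in> center P t S"
    unfolding center_def
  proof (intro CollectI conjI ballI)
    show "amult P t x y \<in> S" using S xS yS by (rule cS_mult)
    fix w assume w: "w \<in> S"
    have "amult P t (amult P t x y) w = amult P t x (amult P t y w)" by (rule assoc)
    also have "\<dots> = amult P t x (amult P t w y)" using yc w by simp
    also have "\<dots> = amult P t (amult P t x w) y" by (simp add: assoc)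
    also have "\<dots> = amult P t (amult P t w x) y" using xc w by simp
    also have "\<dots> = amult P t w (amult P t x y)" by (simp add: assoc)
    finally show "amult P t (amult P t x y) w = amult P t w (amult P t x y)" .
  qed
next
  fix c x assume x: "x \<in> center P t S"
  then show "(\<lambda>p. c * x p) \<in> center P t S"
    using S by (auto simp: center_def smult_left smult_right cS_smult)
qed

lemma vzero_out: "z \<in> algA P \<Longrightarrow> v \<notin> V \<Longrightarrow> z (v, []) = 0"
  using P_fst[of "(v, [])"] algA_out[of z "(v, [])"] by auto

lemma pw_in: "closedS S \<Longrightarrow> z \<in> S \<Longrightarrow> pw P t z k \<in> S"
  by (induction k) (auto simp: cS_unit cS_mult)

lemma pw_vanish: assumes "vanish z 1" shows "vanish (pw P t z k) k"
proof (induction k)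
  case 0 then show ?case by (simp add: vanish_def)
next
  case (Suc k) then show ?case using vanish_mult[OF Suc assms] by simp
qed

lemma pw_zero: assumes "vanish z 1" shows "\<exists>m. pw P t z m = (\<lambda>p. 0)"
proof -
  obtain Nb where Nb: "\<forall>p\<in>P. length (snd p) < Nb" using bound by blast
  have v: "vanish (pw P t z (Suc Nb)) (Suc Nb)" by (rule pw_vanish[OF assms])
  have "pw P t z (Suc Nb) = (\<lambda>p. 0)"
  proof (rule ext)
    fix p show "pw P t z (Suc Nb) p = 0"
    proof (cases "p \<in> P")
      case True
      have "length (snd p) < Suc Nb" using Nb True by (simp add: less_Suc_eq)
      then show ?thesis using v unfolding vanish_def by blast
    next
      case False then show ?thesis by (simp add: am_out)
    qed
  qed
  then show ?thesis by blast
qed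

lemma vzero_vanish: "z \<in> algA P \<Longrightarrow> (\<forall>v\<in>V. z (v, []) = 0) \<Longrightarrow> vanish z 1"
proof -
  assume zA: "z \<in> algA P" and zv: "\<forall>v\<in>V. z (v, []) = 0"
  show "vanish z 1" unfolding vanish_def
  proof (intro allI impI)
    fix p :: "'v \<times> 'a list" assume "length (snd p) < 1"
    then have pe: "p = (fst p, [])" by (cases p) simp
    show "z p = 0"
    proof (cases "fst p \<in> V")
      case True then show ?thesis using zv pe by (metis)
    next
      case False then show ?thesis using vzero_out[OF zA False] pe by metis
    qed
  qed
qed

lemma J1:
  assumes S: "closedS S" and L: "max_left_ideal P t S L" and yS: "y \<in> S"
    and yv: "\<forall>v\<in>V. y (v, []) = 0"
  shows "y \<in> L"
proof (rule ccontr)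
  assume yL: "y \<notin> L"
  have LI: "left_ideal P t S L" and LS: "L \<noteq> S"
    and Lmax: "\<And>L'. left_ideal P t S L' \<Longrightarrow> L \<subseteq> L' \<Longrightarrow> L' = L \<or> L' = S"
    using L unfolding max_left_ideal_def by blast+
  have LsubS: "L \<subseteq> S" and L0: "(\<lambda>p. 0) \<in> L" and Ladd: "\<And>x y. x \<in> L \<Longrightarrow> y \<in> L \<Longrightarrow> (\<lambda>p. x p + y p) \<in> L"
    and Lneg: "\<And>x. x \<in> L \<Longrightarrow> (\<lambda>p. - x p) \<in> L"
    and Lmul: "\<And>x y. x \<in> S \<Longrightarrow> y \<in> L \<Longrightarrow> amult P t x y \<in> L"
    using LI unfolding left_ideal_def by blast+
  define L' where "L' = {w. \<exists>l\<in>L. \<exists>x\<in>S. w = (\<lambda>p. l p + amult P t x y p)}"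
  have L'I: "left_ideal P t S L'"
    unfolding left_ideal_def
  proof (intro conjI ballI)
    show "L' \<subseteq> S"
    proof
      fix w assume "w \<in> L'"
      then obtain l x where l: "l \<in> L" and x: "x \<in> S" and we: "w = (\<lambda>p. l p + amult P t x y p)"
        unfolding L'_def by blast
      show "w \<in> S" unfolding we using cS_add[OF S _ cS_mult[OF S x yS]] l LsubS by blast
    qed
    show "(\<lambda>p. 0) \<in> L'"
      unfolding L'_def using L0 cS_zero[OF S] by (auto simp: zero_left intro!: bexI[of _ "\<lambda>p. 0"])
    fix a b assume a: "a \<in> L'" and b: "b \<in> L'"
    then obtain l1 x1 l2 x2 where l1: "l1 \<in> L" and x1: "x1 \<in> S" and l2: "l2 \<in> L" and x2: "x2 \<in> S"
      and ae: "a = (\<lambda>p. l1 p + amult P t x1 y p)" and be: "b = (\<lambda>p. l2 p + amult P t x2 y p)"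
      unfolding L'_def by blast
    have "(\<lambda>p. a p + b p) = (\<lambda>p. (\<lambda>p. l1 p + l2 p) p + amult P t (\<lambda>p. x1 p + x2 p) y p)"
      by (simp add: ae be add_left algebra_simps)
    then show "(\<lambda>p. a p + b p) \<in> L'"
      unfolding L'_def
      by (intro CollectI bexI[OF _ Ladd[OF l1 l2]] bexI[OF _ cS_add[OF S x1 x2]])
  next
    fix a assume a: "a \<in> L'"
    then obtain l1 x1 where l1: "l1 \<in> L" and x1: "x1 \<in> S"
      and ae: "a = (\<lambda>p. l1 p + amult P t x1 y p)"
      unfolding L'_def by blast
    have sm: "amult P t (\<lambda>p. (-1) * x1 p) y = (\<lambda>p. (-1) * amult P t x1 y p)" by (rule smult_left)
    have "(\<lambda>p. - a p) = (\<lambda>p. (\<lambda>p. - l1 p) p + amult P t (\<lambda>p. (-1) * x1 p) y p)"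
      unfolding sm by (simp add: ae)
    then show "(\<lambda>p. - a p) \<in> L'"
      unfolding L'_def
      by (intro CollectI bexI[OF _ Lneg[OF l1]] bexI[OF _ cS_smult[OF S x1]])
  next
    fix w a assume w: "w \<in> S" and a: "a \<in> L'"
    then obtain l1 x1 where l1: "l1 \<in> L" and x1: "x1 \<in> S"
      and ae: "a = (\<lambda>p. l1 p + amult P t x1 y p)"
      unfolding L'_def by blast
    have "amult P t w a = (\<lambda>p. amult P t w l1 p + amult P t (amult P t w x1) y p)"
      by (simp add: ae add_right assoc)
    then show "amult P t w a \<in> L'"
      unfolding L'_def using Lmul[OF w l1] cS_mult[OF S w x1] by blast
  qed
  have "L \<subseteq> L'"
  proof
    fix l assume "l \<in> L"
    moreover have "l = (\<lambda>p. l p + amult P t (\<lambda>p. 0) y p)" by (simp add: zero_left)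
    ultimately show "l \<in> L'" unfolding L'_def using cS_zero[OF S] by blast
  qed
  moreover have "y \<in> L'"
  proof -
    have ye: "y = (\<lambda>p. (\<lambda>p. 0) p + amult P t (aunit P) y p)"
      using unit_left[OF cS_sub[OF S yS]] by simp
    show ?thesis unfolding L'_def
      by (intro CollectI bexI[OF _ L0] bexI[OF _ cS_unit[OF S]]) (rule ye)
  qed
  ultimately have "L' = S" using Lmax[OF L'I] yL by blast
  then have "aunit P \<in> L'" using cS_unit[OF S] by simp
  then obtain l x where l: "l \<in> L" and x: "x \<in> S" and ue: "aunit P = (\<lambda>p. l p + amult P t x y p)"
    unfolding L'_def by blast
  define z where "z = amult P t x y"
  have zS: "z \<in> S" unfolding z_def using S x yS by (rule cS_mult)
  have zA: "z \<in> algA P" by (simp add: z_def amult_algA)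
  have zv: "\<forall>v\<in>V. z (v, []) = 0" using yv by (simp add: z_def vcoef)
  have zvan: "vanish z 1" by (rule vzero_vanish[OF zA zv])
  have le: "l = (\<lambda>p. aunit P p + (-1) * z p)" using ue by (simp add: z_def)
  have tele: "(\<lambda>p. \<Sum>k<m. amult P t (pw P t z k) l p) = (\<lambda>p. aunit P p - pw P t z m p)" for m
  proof (induction m)
    case 0 then show ?case by simp
  next
    case (Suc m)
    have pA: "pw P t z m \<in> algA P" using pw_in[OF closed_algA zA] .
    have "amult P t (pw P t z m) l = (\<lambda>p. pw P t z m p + (-1) * pw P t z (Suc m) p)"
      unfolding le add_right smult_right unit_right[OF pA] by simp
    then have "(\<lambda>p. \<Sum>k<Suc m. amult P t (pw P t z k) l p)
       = (\<lambda>p. (\<Sum>k<m. amult P t (pw P t z k) l p) + (pw P t z m p + (-1) * pw P t z (Suc m) p))"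
      by (simp add: fun_eq_iff)
    also have "\<dots> = (\<lambda>p. aunit P p - pw P t z (Suc m) p)"
      using fun_cong[OF Suc.IH] by (simp add: fun_eq_iff)
    finally show ?case .
  qed
  have inL: "(\<lambda>p. \<Sum>k<m. amult P t (pw P t z k) l p) \<in> L" for m
  proof (induction m)
    case 0 then show ?case using L0 by simp
  next
    case (Suc m)
    have "amult P t (pw P t z m) l \<in> L" using Lmul[OF pw_in[OF S zS] l] .
    from Ladd[OF Suc.IH this] show ?case by simp
  qed
  obtain m where "pw P t z m = (\<lambda>p. 0)" using pw_zero[OF zvan] by blast
  then have "aunit P \<in> L" using inL[of m] tele[of m] by simp
  then have "S \<subseteq> L"
  proof -
    assume u: "aunit P \<in> L"
    show "S \<subseteq> L"
    proof
      fix w assume w: "w \<in> S"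
      have "amult P t w (aunit P) \<in> L" using Lmul[OF w u] .
      then show "w \<in> L" using unit_right[OF cS_sub[OF S w]] by simp
    qed
  qed
  then show False using LS LsubS by blast
qed

lemma J2:
  assumes S: "closedS S" and v: "v \<in> V"
  shows "max_left_ideal P t S {z \<in> S. z (v, []) = 0}"
proof -
  let ?M = "{z \<in> S. z (v, []) = 0}"
  have vP: "(v, []) \<in> P" using P_triv[OF v] .
  have MI: "left_ideal P t S ?M"
    unfolding left_ideal_def
  proof (intro conjI ballI)
    show "?M \<subseteq> S" by blast
    show "(\<lambda>p. 0) \<in> ?M" using cS_zero[OF S] by simp
    fix x y assume x: "x \<in> ?M" and y: "y \<in> ?M"
    then show "(\<lambda>p. x p + y p) \<in> ?M" using cS_add[OF S] by simp
  next
    fix x assume x: "x \<in> ?M"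
    then show "(\<lambda>p. - x p) \<in> ?M" using cS_neg[OF S] by simp
  next
    fix x y assume x: "x \<in> S" and y: "y \<in> ?M"
    then show "amult P t x y \<in> ?M" using cS_mult[OF S] by (simp add: vcoef[OF v])
  qed
  have MS: "?M \<noteq> S"
  proof
    assume "?M = S"
    then have "aunit P \<in> ?M" using cS_unit[OF S] by simp
    then show False using vP by (simp add: aunit_def)
  qed
  have "L' = ?M \<or> L' = S" if L'I: "left_ideal P t S L'" and sub: "?M \<subseteq> L'" for L'
  proof (cases "L' \<subseteq> ?M")
    case True then show ?thesis using sub by blast
  next
    case False
    have L'S: "L' \<subseteq> S" and L'add: "\<And>x y. x \<in> L' \<Longrightarrow> y \<in> L' \<Longrightarrow> (\<lambda>p. x p + y p) \<in> L'"
      and L'mul: "\<And>x y. x \<in> S \<Longrightarrow> y \<in> L' \<Longrightarrow> amult P t x y \<in> L'"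
      using L'I unfolding left_ideal_def by blast+
    obtain z where z: "z \<in> L'" and zc: "z (v, []) \<noteq> 0" using False L'S by blast
    define c where "c = z (v, [])"
    have zS: "z \<in> S" using z L'S by blast
    have w: "amult P t (\<lambda>p. inverse c * aunit P p) z = (\<lambda>p. inverse c * z p)"
      using smult_left unit_left[OF cS_sub[OF S zS]] by metis
    have wL: "(\<lambda>p. inverse c * z p) \<in> L'"
      using L'mul[OF cS_smult[OF S cS_unit[OF S], of "inverse c"] z] w by simp
    have wS: "(\<lambda>p. inverse c * z p) \<in> S" using cS_smult[OF S zS] .
    define m where "m = (\<lambda>p. aunit P p - inverse c * z p)"
    have mS: "m \<in> S" unfolding m_def using cS_diff[OF S cS_unit[OF S] wS] .
    have "m (v, []) = 0" using vP zc by (simp add: m_def aunit_def c_def)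
    then have mL: "m \<in> L'" using mS sub by blast
    have "aunit P = (\<lambda>p. m p + inverse c * z p)" by (simp add: m_def)
    then have uL: "aunit P \<in> L'" using L'add[OF mL wL] by simp
    have "S \<subseteq> L'"
    proof
      fix x assume x: "x \<in> S"
      have "amult P t x (aunit P) \<in> L'" using L'mul[OF x uL] .
      then show "x \<in> L'" using unit_right[OF cS_sub[OF S x]] by simp
    qed
    then show ?thesis using L'S by blast
  qed
  then show ?thesis using MI MS unfolding max_left_ideal_def by blast
qed

lemma jrad_lower:
  assumes S: "closedS S"
  shows "{z \<in> S. \<forall>v\<in>V. z (v, []) = 0} \<subseteq> jrad P t S"
  using J1[OF S] unfolding jrad_def by blast

lemma jrad_upper:
  assumes S: "closedS S" and v: "v \<in> V"
  shows "jrad P t S \<subseteq> {z \<in> S. z (v, []) = 0}"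
  using J2[OF S v] unfolding jrad_def by blast

end



lemma fsum_apply: "(sum g Q) p = (\<Sum>q\<in>Q. g q p)"
  by (induction Q rule: infinite_finite_induct) auto

lemma dim_plus_one:
  fixes scale :: "'k::field \<Rightarrow> 'b::ab_group_add \<Rightarrow> 'b"
  assumes vs: "vector_space scale"
    and T: "module.subspace scale T" and F: "finite F" "T \<subseteq> module.span scale F"
    and u: "u \<notin> T" and S: "S = {y + scale c u | y c. y \<in> T}"
  shows "vector_space.dim scale S = vector_space.dim scale T + 1"
proof -
  interpret vector_space scale by (rule vs)
  obtain B where B: "B \<subseteq> T" "independent B" "T \<subseteq> span B" "card B = dim T"
    using basis_exists[of T] by blast
  have finB: "finite B" using independent_span_bound[OF F(1) B(2)] B(1) F(2) by blast
  have spB: "span B \<subseteq> T" using span_minimal[OF B(1) T] .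
  have uB: "u \<notin> span B" using spB u by blast
  have "dim S = Suc (card B)"
  proof (rule dim_unique[of "insert u B"])
    show "insert u B \<subseteq> S"
    proof
      fix x assume "x \<in> insert u B"
      then show "x \<in> S"
      proof
        assume "x = u"
        then have "x = 0 + scale 1 u" by simp
        then show ?thesis using S subspace_0[OF T] by blast
      next
        assume "x \<in> B"
        then have "x = x + scale 0 u" "x \<in> T" using B(1) by auto
        then show ?thesis using S by blast
      qed
    qed
    show "S \<subseteq> span (insert u B)"
    proof
      fix x assume "x \<in> S"
      then obtain y c where x: "x = y + scale c u" and y: "y \<in> T" using S by blast
      have "y \<in> span (insert u B)" using y B(3) span_mono[of B "insert u B"] by blast
      moreover have "scale c u \<in> span (insert u B)" by (intro span_scale span_base) simp
      ultimately show "x \<in> span (insert u B)" unfolding x by (rule span_add)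
    qed
    show "independent (insert u B)" using independent_insertI[OF uB B(2)] .
    have "u \<notin> B" using uB span_base[of u B] by blast
    then show "card (insert u B) = Suc (card B)" using finB by simp
  qed
  then show ?thesis using B(4) by simp
qed

locale mq2 = mq V Ar s t R
  for V :: "'v set" and Ar :: "'a set" and s t :: "'a \<Rightarrow> 'v" and R :: "'a list set" +
  fixes v1 vn :: 'v
  assumes v1: "v1 \<in> V" and vn: "vn \<in> V"
    and tb1: "(v1, vn) \<notin> qconn V Ar s t"
    and tb2: "\<forall>w\<in>V. (v1, w) \<in> qconn V Ar s t \<or> (vn, w) \<in> qconn V Ar s t"
begin

abbreviation "Q \<equiv> qconn V Ar s t"

lemma v1n: "v1 \<noteq> vn" using tb1 by (auto simp: qconn_def)

lemma Q_sym: "(x, y) \<in> Q \<Longrightarrow> (y, x) \<in> Q"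
proof -
  have "sym {(u, w). \<exists>a\<in>Ar. (s a = u \<and> t a = w) \<or> (s a = w \<and> t a = u)}"
    by (auto simp: sym_def)
  then have "sym Q" unfolding qconn_def by (rule sym_rtrancl)
  then show "(x, y) \<in> Q \<Longrightarrow> (y, x) \<in> Q" by (auto simp: sym_def)
qed

lemma Q_edge: "a \<in> Ar \<Longrightarrow> (s a, t a) \<in> Q"
  unfolding qconn_def by (rule r_into_rtrancl) blast

lemma path_conn: "(v, w) \<in> P \<Longrightarrow> (v, ptgt t (v, w)) \<in> Q"
proof (induction w rule: rev_induct)
  case Nil then show ?case by (simp add: ptgt_def qconn_def)
next
  case (snoc a w)
  have pre: "(v, w) \<in> P" using P_prefix snoc.prems by blast
  have suf: "(ptgt t (v, w), [a]) \<in> P" using P_suffix snoc.prems by blast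
  then have sa: "s a = ptgt t (v, w)" and a: "a \<in> Ar"
    by (auto simp: NP_def valid_path_def)
  have "(v, s a) \<in> Q" using snoc.IH[OF pre] sa by simp
  moreover have "(s a, t a) \<in> Q" by (rule Q_edge[OF a])
  ultimately have "(v, t a) \<in> Q" unfolding qconn_def by (rule rtrancl_trans)
  then show ?case by (simp add: ptgt_def)
qed

lemma path_conn': "p \<in> P \<Longrightarrow> (fst p, ptgt t p) \<in> Q"
  using path_conn[of "fst p" "snd p"] by simp

definition Bset :: "(('v \<times> 'a list) \<Rightarrow> 'k::field) set" where
  "Bset = {f \<in> algA P. f (v1, []) = f (vn, [])}"

lemma closed_Bset: "closedS (Bset :: (('v \<times> 'a list) \<Rightarrow> 'k::field) set)"
  unfolding closedS_def
proof (intro conjI ballI allI impI)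
  show "Bset \<subseteq> algA P" by (auto simp: Bset_def)
  show "aunit P \<in> Bset" using P_triv[OF v1] P_triv[OF vn] by (simp add: Bset_def aunit_algA) (simp add: aunit_def)
  fix x y :: "('v \<times> 'a list) \<Rightarrow> 'k" assume x: "x \<in> Bset" and y: "y \<in> Bset"
  then have xa: "x \<in> algA P" and ya: "y \<in> algA P" and xe: "x (v1, []) = x (vn, [])" and ye: "y (v1, []) = y (vn, [])"
    by (auto simp: Bset_def)
  show "(\<lambda>p. x p + y p) \<in> Bset" using xa ya xe ye by (simp add: Bset_def algA_def)
  show "amult P t x y \<in> Bset" using xe ye by (simp add: Bset_def amult_algA vcoef[OF v1] vcoef[OF vn])
next
  fix c :: 'k and x :: "('v \<times> 'a list) \<Rightarrow> 'k" assume x: "x \<in> Bset"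
  then show "(\<lambda>p. c * x p) \<in> Bset" by (simp add: Bset_def algA_def)
qed

lemma delta_algA: "q \<in> P \<Longrightarrow> delta q \<in> algA P"
  by (auto simp: algA_def delta_def)

lemma deltas_in:
  fixes S :: "(('v \<times> 'a list) \<Rightarrow> 'k::field) set"
  assumes S: "closedS S" and arr: "\<forall>a\<in>Ar. arrow_elt s a \<in> S"
  shows "q \<in> P \<Longrightarrow> snd q \<noteq> [] \<Longrightarrow> delta q \<in> S"
proof (induction "snd q" arbitrary: q rule: rev_induct)
  case Nil then show ?case by simp
next
  case (snoc a w)
  obtain v where q: "q = (v, w @ [a])" using snoc.hyps by (metis prod.collapse)
  have suf: "(ptgt t (v, w), [a]) \<in> P" using P_suffix snoc.prems q by blast
  then have sa: "s a = ptgt t (v, w)" and a: "a \<in> Ar"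
    by (auto simp: NP_def valid_path_def)
  have da: "delta (s a, [a]) \<in> S" using arr a by (simp add: arrow_elt_def delta_def)
  show ?case
  proof (cases "w = []")
    case True
    then have "q = (s a, [a])" using q sa by (simp add: ptgt_def)
    then show ?thesis using da by simp
  next
    case False
    have pre: "(v, w) \<in> P" using P_prefix snoc.prems q by blast
    have dw: "delta (v, w) \<in> S" using snoc.hyps(1)[of "(v, w)"] pre False by simp
    have m: "amult P t (delta (v, w)) (delta (s a, [a])) \<in> S" using cS_mult[OF S dw da] .
    have e: "amult P t (delta (v, w)) (delta (s a, [a])) = (delta (v, w @ [a]) :: ('v \<times> 'a list) \<Rightarrow> 'k)"
      using delta_mult[of "(v, w)" a] snoc.prems q sa by simp
    have "delta (v, w @ [a]) \<in> S" using m unfolding e .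
    then show ?thesis using q by simp
  qed
qed

lemma cS_sum: assumes S: "closedS S" shows "finite A \<Longrightarrow> (\<forall>q\<in>A. g q \<in> S) \<Longrightarrow> (\<lambda>p. \<Sum>q\<in>A. c q * g q p) \<in> S"
proof (induction A rule: finite_induct)
  case empty then show ?case using cS_zero[OF S] by simp
next
  case (insert x F)
  have "(\<lambda>p. c x * g x p + (\<Sum>q\<in>F. c q * g q p)) \<in> S"
    using cS_add[OF S cS_smult[OF S] insert.IH] insert.prems by simp
  then show ?case using insert.hyps by simp
qed

abbreviation "G \<equiv> ({\<lambda>p. vert_elt v1 p + vert_elt vn p} \<union> vert_elt ` (V - {v1, vn}) \<union> arrow_elt s ` Ar)"

definition fam where "fam = {S. S \<subseteq> algA P \<and> G \<subseteq> S \<and> aunit P \<in> S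
      \<and> (\<forall>x\<in>S. \<forall>y\<in>S. (\<lambda>p. x p + y p) \<in> S \<and> amult P t x y \<in> S)
      \<and> (\<forall>c x. x \<in> S \<longrightarrow> (\<lambda>p. c * x p) \<in> S)}"

lemma gen_fam: "gen_subalg P t G = \<Inter> fam"
  by (simp add: gen_subalg_def fam_def)

lemma fam_iff: "S \<in> fam \<longleftrightarrow> closedS S \<and> G \<subseteq> S"
  unfolding fam_def closedS_def mem_Collect_eq by (intro iffI; elim conjE; intro conjI; assumption)

lemma B_eq: "gen_subalg P t G = (Bset :: (('v \<times> 'a list) \<Rightarrow> 'k::field) set)"
proof
  have GB: "G \<subseteq> Bset"
  proof -
    have 1: "(\<lambda>p. vert_elt v1 p + vert_elt vn p) \<in> Bset"
      using P_triv[OF v1] P_triv[OF vn] v1n by (auto simp: Bset_def algA_def vert_elt_def)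
    have 2: "vert_elt w \<in> Bset" if "w \<in> V - {v1, vn}" for w
      using P_triv[of w] that by (auto simp: Bset_def algA_def vert_elt_def)
    have 3: "arrow_elt s a \<in> Bset" if "a \<in> Ar" for a
      using P_arrow[OF that] by (auto simp: Bset_def algA_def arrow_elt_def)
    show ?thesis using 1 2 3 by blast
  qed
  have "Bset \<in> fam" using GB closed_Bset fam_iff by blast
  then show "gen_subalg P t G \<subseteq> (Bset :: (('v \<times> 'a list) \<Rightarrow> 'k) set)" unfolding gen_fam by (rule Inter_lower)
next
  show "(Bset :: (('v \<times> 'a list) \<Rightarrow> 'k) set) \<subseteq> gen_subalg P t G"
    unfolding gen_fam
  proof (rule Inter_greatest)
    fix S :: "(('v \<times> 'a list) \<Rightarrow> 'k) set"
    assume "S \<in> fam"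
    then have S: "closedS S" and GS: "G \<subseteq> S" using fam_iff by blast+
    have arr: "\<forall>a\<in>Ar. arrow_elt s a \<in> S" using GS by blast
    have e1n: "(\<lambda>p. vert_elt v1 p + vert_elt vn p) \<in> S" using GS by blast
    let ?A = "P - {(v1, []), (vn, [])}"
    have dA: "\<forall>q\<in>?A. delta q \<in> S"
    proof
      fix q assume q: "q \<in> ?A"
      show "delta q \<in> S"
      proof (cases "snd q = []")
        case True
        obtain w where qw: "q = (w, [])" using True by (cases q) auto
        have "w \<in> V" using q P_fst qw by fastforce
        moreover have "w \<noteq> v1" "w \<noteq> vn" using q qw by auto
        ultimately have "w \<in> V - {v1, vn}" by blast
        then have "vert_elt w \<in> S" using GS by blast
        moreover have "vert_elt w = (delta q :: ('v \<times> 'a list) \<Rightarrow> 'k)"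
          unfolding qw by (simp add: vert_elt_def delta_def)
        ultimately show ?thesis by simp
      next
        case False then show ?thesis using deltas_in[OF S arr] q by blast
      qed
    qed
    show "Bset \<subseteq> S"
    proof
      fix f :: "('v \<times> 'a list) \<Rightarrow> 'k" assume f: "f \<in> Bset"
      have fA: "f \<in> algA P" and f1n: "f (v1, []) = f (vn, [])" using f by (auto simp: Bset_def)
      have s1: "(\<lambda>p. f (v1, []) * (vert_elt v1 p + vert_elt vn p)) \<in> S" using cS_smult[OF S e1n] .
      have s2: "(\<lambda>p. \<Sum>q\<in>?A. f q * delta q p) \<in> S" using cS_sum[OF S _ dA] finite_P by simp
      have "f = (\<lambda>p. f (v1, []) * (vert_elt v1 p + vert_elt vn p) + (\<Sum>q\<in>?A. f q * delta q p))"
      proof (rule ext)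
        fix p
        have sd: "(\<Sum>q\<in>?A. f q * delta q p) = (if p \<in> ?A then f p else 0)"
        proof -
          have "(\<Sum>q\<in>?A. f q * delta q p) = (\<Sum>q\<in>?A. if p = q then f p else 0)"
            by (rule sum.cong) (auto simp: delta_def)
          also have "\<dots> = (if p \<in> ?A then f p else 0)"
            using finite_P by (simp add: sum.delta)
          finally show ?thesis .
        qed
        show "f p = f (v1, []) * (vert_elt v1 p + vert_elt vn p) + (\<Sum>q\<in>?A. f q * delta q p)"
        proof (cases "p = (v1, []) \<or> p = (vn, [])")
          case True
          then show ?thesis unfolding sd using v1n f1n by (auto simp: vert_elt_def)
        next
          case False
          then have "vert_elt v1 p = (0::'k)" "vert_elt vn p = (0::'k)" by (auto simp: vert_elt_def)
          then show ?thesis unfolding sd using False algA_out[OF fA, of p] by auto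
        qed
      qed
      then show "f \<in> S" using cS_add[OF S s1 s2] by simp
    qed
  qed
qed

end



context mq2 begin

abbreviation Zc :: "(('v \<times> 'a list) \<Rightarrow> 'k::field) set" where "Zc \<equiv> center P t (algA P)"
abbreviation Zb :: "(('v \<times> 'a list) \<Rightarrow> 'k::field) set" where "Zb \<equiv> center P t Bset"

lemma arrow_const:
  fixes z :: "('v \<times> 'a list) \<Rightarrow> 'k::field"
  assumes z: "z \<in> Zc" and a: "a \<in> Ar"
  shows "z (s a, []) = z (t a, [])"
proof -
  let ?p = "(s a, [a])"
  have pP: "?p \<in> P" using P_arrow[OF a] .
  have sP: "(s a, []) \<in> P" using P_triv quiver a by blast
  have tP: "(t a, []) \<in> P" using P_triv quiver a by blast
  have dA: "delta ?p \<in> algA P" using delta_algA[OF pP] .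
  have comm: "amult P t z (delta ?p) = amult P t (delta ?p) z" using z dA by (auto simp: center_def)
  have l: "amult P t z (delta ?p) ?p = z (s a, [])"
    unfolding am_sum[OF pP]
  proof (rule sum_single2[OF sP pP])
    fix q r assume "q \<in> P" "r \<in> P"
    show "(if pcat t q r = Some ?p then z q * delta ?p r else 0) =
      (if r = ?p then if q = (s a, []) then z (s a, []) else 0 else 0)"
    proof (cases "r = ?p")
      case True
      have "pcat t q r = Some ?p \<longleftrightarrow> q = (s a, [])"
        using True by (cases q) (auto simp: pcat_Some ptgt_def)
      then show ?thesis using True by (simp add: delta_def)
    qed (simp add: delta_def)
  qed
  have r: "amult P t (delta ?p) z ?p = z (t a, [])"
    unfolding am_sum[OF pP]
  proof (rule sum_single2[OF pP tP])
    fix q r assume "q \<in> P" "r \<in> P"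
    show "(if pcat t q r = Some ?p then delta ?p q * z r else 0) =
      (if r = (t a, []) then if q = ?p then z (t a, []) else 0 else 0)"
    proof (cases "q = ?p")
      case True
      have "pcat t q r = Some ?p \<longleftrightarrow> r = (t a, [])"
        using True by (cases r) (auto simp: pcat_Some ptgt_def)
      then show ?thesis using True by (simp add: delta_def)
    qed (simp add: delta_def)
  qed
  show ?thesis using l r comm by simp
qed

lemma comp_const:
  fixes z :: "('v \<times> 'a list) \<Rightarrow> 'k::field"
  assumes z: "z \<in> Zc" and w: "(u, w) \<in> Q"
  shows "z (w, []) = z (u, [])"
  using w unfolding qconn_def
proof (induction rule: rtrancl_induct)
  case base then show ?case by simp
next
  case (step y w)
  then obtain a where a: "a \<in> Ar" and "(s a = y \<and> t a = w) \<or> (s a = w \<and> t a = y)" by blast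
  then have "z (w, []) = z (y, [])" using arrow_const[OF z a] by auto
  then show ?case using step.IH by simp
qed

lemma Zc_vert:
  fixes z :: "('v \<times> 'a list) \<Rightarrow> 'k::field"
  assumes z: "z \<in> Zc" and w: "w \<in> V"
  shows "z (w, []) = z (v1, []) \<or> z (w, []) = z (vn, [])"
  using tb2 w comp_const[OF z] by blast

definition phi1 :: "'v \<Rightarrow> 'k::field" where "phi1 w = (if w \<in> V \<and> (v1, w) \<in> Q then 1 else 0)"
definition u1 :: "('v \<times> 'a list) \<Rightarrow> 'k::field" where "u1 p = (if snd p = [] then phi1 (fst p) else 0)"

lemma u1_diag: "\<forall>q\<in>P. u1 q = (if snd q = [] then phi1 (fst q) else 0)"
  by (simp add: u1_def)

lemma phi1_path: "p \<in> P \<Longrightarrow> phi1 (fst p) = phi1 (ptgt t p)"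
proof -
  assume p: "p \<in> P"
  have c: "(fst p, ptgt t p) \<in> Q" using path_conn'[OF p] .
  have "(v1, fst p) \<in> Q \<longleftrightarrow> (v1, ptgt t p) \<in> Q"
    using c Q_sym[OF c] unfolding qconn_def by (meson rtrancl_trans)
  then show ?thesis using P_fst[OF p] P_ptgt[OF p] by (simp add: phi1_def)
qed

lemma u1_algA: "u1 \<in> algA P"
  unfolding algA_def
proof (intro CollectI allI impI)
  fix p :: "'v \<times> 'a list" assume p: "p \<notin> P"
  show "u1 p = 0"
  proof (rule ccontr)
    assume "u1 p \<noteq> 0"
    then have "snd p = []" "fst p \<in> V" by (auto simp: u1_def phi1_def split: if_splits)
    then have "p \<in> P" using P_triv by (metis prod.collapse)
    then show False using p by simp
  qed
qed

lemma u1_Zc: "u1 \<in> Zc"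
  unfolding center_def
proof (intro CollectI conjI ballI)
  show "u1 \<in> algA P" by (rule u1_algA)
  fix x assume x: "x \<in> algA P"
  show "amult P t u1 x = amult P t x u1"
  proof (rule ext)
    fix p show "amult P t u1 x p = amult P t x u1 p"
    proof (cases "p \<in> P")
      case True
      then show ?thesis
        by (simp add: diag_left[OF u1_diag True] diag_right[OF u1_diag True] phi1_path[OF True] mult.commute)
    qed (simp add: am_out)
  qed
qed

lemma u1_v1: "u1 (v1, []) = 1" using v1 by (simp add: u1_def phi1_def qconn_def)
lemma u1_vn: "u1 (vn, []) = 0" using tb1 by (simp add: u1_def phi1_def)

lemma closed_Zc: "closedS (Zc :: (('v \<times> 'a list) \<Rightarrow> 'k::field) set)"
  by (rule closed_center[OF closed_algA])

lemma closed_Zb: "closedS (Zb :: (('v \<times> 'a list) \<Rightarrow> 'k::field) set)"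
  by (rule closed_center[OF closed_Bset])

lemma Zb_sub: "(Zb :: (('v \<times> 'a list) \<Rightarrow> 'k::field) set) \<subseteq> Zc"
proof
  fix z :: "('v \<times> 'a list) \<Rightarrow> 'k" assume z: "z \<in> Zb"
  then have zB: "z \<in> Bset" and zc: "\<forall>x\<in>Bset. amult P t z x = amult P t x z" by (auto simp: center_def)
  have zA: "z \<in> algA P" using zB by (simp add: Bset_def)
  have "amult P t z x = amult P t x z" if x: "x \<in> algA P" for x
  proof -
    define c where "c = x (v1, []) - x (vn, [])"
    define x' where "x' = (\<lambda>p. x p + (- c) * u1 p)"
    have x'B: "x' \<in> Bset"
    proof -
      have u: "(u1 :: _ \<Rightarrow> 'k) \<in> algA P" by (rule u1_algA)
      show ?thesis using x u by (simp add: x'_def Bset_def algA_def c_def u1_v1 u1_vn)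
    qed
    have xe: "x = (\<lambda>p. x' p + c * u1 p)" by (simp add: x'_def)
    have uc: "amult P t z u1 = amult P t u1 z" using u1_Zc zA by (auto simp: center_def)
    show ?thesis
      unfolding xe add_left add_right smult_left smult_right using zc x'B uc by simp
  qed
  then show "z \<in> Zc" using zA by (simp add: center_def)
qed

lemma Zc_B_sub: "z \<in> Zc \<Longrightarrow> z \<in> Bset \<Longrightarrow> z \<in> Zb"
  by (auto simp: center_def Bset_def)

lemma Zc_vert_zero:
  fixes z :: "('v \<times> 'a list) \<Rightarrow> 'k::field"
  assumes z: "z \<in> Zc" and "z (v1, []) = 0" "z (vn, []) = 0"
  shows "\<forall>w\<in>V. z (w, []) = 0"
  using Zc_vert[OF z] assms by auto

lemma jrad_Zc: "jrad P t (Zc :: (('v \<times> 'a list) \<Rightarrow> 'k::field) set) = {z \<in> Zc. \<forall>w\<in>V. z (w, []) = 0}"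
proof
  show "{z \<in> Zc. \<forall>w\<in>V. z (w, []) = 0} \<subseteq> jrad P t (Zc :: (('v \<times> 'a list) \<Rightarrow> 'k::field) set)"
    by (rule jrad_lower[OF closed_Zc])
  show "jrad P t (Zc :: (('v \<times> 'a list) \<Rightarrow> 'k::field) set) \<subseteq> {z \<in> Zc. \<forall>w\<in>V. z (w, []) = 0}"
    using jrad_upper[OF closed_Zc v1] jrad_upper[OF closed_Zc vn] Zc_vert_zero by blast
qed

lemma jrad_Zb: "jrad P t (Zb :: (('v \<times> 'a list) \<Rightarrow> 'k::field) set) = {z \<in> Zc. \<forall>w\<in>V. z (w, []) = 0}"
proof
  have "{z \<in> Zc. \<forall>w\<in>V. z (w, []) = (0::'k)} \<subseteq> {z \<in> Zb. \<forall>w\<in>V. z (w, []) = 0}"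
    using Zc_B_sub v1 vn by (auto simp: Bset_def center_def)
  also have "\<dots> \<subseteq> jrad P t Zb" by (rule jrad_lower[OF closed_Zb])
  finally show "{z \<in> Zc. \<forall>w\<in>V. z (w, []) = 0} \<subseteq> jrad P t (Zb :: (('v \<times> 'a list) \<Rightarrow> 'k::field) set)" .
  show "jrad P t (Zb :: (('v \<times> 'a list) \<Rightarrow> 'k::field) set) \<subseteq> {z \<in> Zc. \<forall>w\<in>V. z (w, []) = 0}"
  proof
    fix z :: "('v \<times> 'a list) \<Rightarrow> 'k" assume "z \<in> jrad P t Zb"
    then have zb: "z \<in> Zb" and z1: "z (v1, []) = 0" using jrad_upper[OF closed_Zb v1] by auto
    have zc: "z \<in> Zc" using Zb_sub zb by blast
    have "z (vn, []) = 0" using zb z1 by (simp add: center_def Bset_def)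
    then show "z \<in> {z \<in> Zc. \<forall>w\<in>V. z (w, []) = 0}" using Zc_vert_zero[OF zc z1] zc by blast
  qed
qed

lemma Zc_decomp: "(Zc :: (('v \<times> 'a list) \<Rightarrow> 'k::field) set) = {y + (\<lambda>p. c * u1 p) | y c. y \<in> Zb}"
proof
  show "(Zc :: (('v \<times> 'a list) \<Rightarrow> 'k::field) set) \<subseteq> {y + (\<lambda>p. c * u1 p) | y c. y \<in> Zb}"
  proof
    fix z :: "('v \<times> 'a list) \<Rightarrow> 'k" assume z: "z \<in> Zc"
    define c where "c = z (v1, []) - z (vn, [])"
    define y where "y = (\<lambda>p. z p + (- c) * u1 p)"
    have yc: "y \<in> Zc" unfolding y_def using cS_add[OF closed_Zc z cS_smult[OF closed_Zc u1_Zc]] .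
    have "y \<in> Bset" using yc by (simp add: y_def c_def Bset_def center_def u1_v1 u1_vn)
    then have "y \<in> Zb" using Zc_B_sub yc by blast
    moreover have "z = y + (\<lambda>p. c * u1 p)" by (simp add: y_def fun_eq_iff)
    ultimately show "z \<in> {y + (\<lambda>p. c * u1 p) | y c. y \<in> Zb}" by blast
  qed
  show "{y + (\<lambda>p. c * u1 p) | y c. y \<in> Zb} \<subseteq> (Zc :: (('v \<times> 'a list) \<Rightarrow> 'k::field) set)"
  proof
    fix z :: "('v \<times> 'a list) \<Rightarrow> 'k" assume "z \<in> {y + (\<lambda>p. c * u1 p) | y c. y \<in> Zb}"
    then obtain y c where y: "y \<in> Zb" and ze: "z = y + (\<lambda>p. c * u1 p)" by blast
    have "(\<lambda>p. y p + c * u1 p) \<in> Zc"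
      using cS_add[OF closed_Zc _ cS_smult[OF closed_Zc u1_Zc]] y Zb_sub by blast
    then show "z \<in> Zc" using ze by (simp add: plus_fun_def)
  qed
qed

end



lemma vs_fun: "vector_space (\<lambda>c (f :: 'x \<Rightarrow> 'k::field). \<lambda>p. c * f p)"
  by unfold_locales (simp_all add: fun_eq_iff plus_fun_def algebra_simps)

context mq2 begin

lemma kdim_eq: "kdim (Zc :: (('v \<times> 'a list) \<Rightarrow> 'k::field) set) = kdim (Zb :: (('v \<times> 'a list) \<Rightarrow> 'k::field) set) + 1"
proof -
  let ?sc = "\<lambda>c (f :: ('v \<times> 'a list) \<Rightarrow> 'k). \<lambda>p. c * f p"
  interpret fv: vector_space ?sc by (rule vs_fun)
  have sub: "fv.subspace (Zb :: (('v \<times> 'a list) \<Rightarrow> 'k) set)"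
  proof -
    have z0: "(\<lambda>p. 0) \<in> (Zb :: (('v \<times> 'a list) \<Rightarrow> 'k) set)" by (rule cS_zero[OF closed_Zb])
    have za: "\<And>x y. x \<in> (Zb :: (('v \<times> 'a list) \<Rightarrow> 'k) set) \<Longrightarrow> y \<in> Zb \<Longrightarrow> (\<lambda>p. x p + y p) \<in> Zb"
      by (rule cS_add[OF closed_Zb])
    have zs: "\<And>x c. x \<in> (Zb :: (('v \<times> 'a list) \<Rightarrow> 'k) set) \<Longrightarrow> (\<lambda>p. c * x p) \<in> Zb"
      by (rule cS_smult[OF closed_Zb])
    show ?thesis unfolding fv.subspace_def using z0 za zs by (simp add: zero_fun_def plus_fun_def)
  qed
  have fin: "finite (delta ` P :: (('v \<times> 'a list) \<Rightarrow> 'k) set)" using finite_P by simp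
  have span: "(Zb :: (('v \<times> 'a list) \<Rightarrow> 'k) set) \<subseteq> fv.span (delta ` P)"
  proof
    fix z :: "('v \<times> 'a list) \<Rightarrow> 'k" assume "z \<in> Zb"
    then have zA: "z \<in> algA P" by (simp add: center_def Bset_def)
    have "z = (\<Sum>q\<in>P. ?sc (z q) (delta q))"
    proof (rule ext)
      fix p
      have "(\<Sum>q\<in>P. ?sc (z q) (delta q)) p = (\<Sum>q\<in>P. z q * delta q p)" by (simp add: fsum_apply)
      also have "\<dots> = (\<Sum>q\<in>P. if p = q then z p else 0)"
        by (rule sum.cong) (auto simp: delta_def)
      also have "\<dots> = (if p \<in> P then z p else 0)" using finite_P by (simp add: sum.delta)
      also have "\<dots> = z p" using algA_out[OF zA, of p] by simp
      finally show "z p = (\<Sum>q\<in>P. ?sc (z q) (delta q)) p" by simp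
    qed
    also have "\<dots> \<in> fv.span (delta ` P)"
      by (intro fv.span_sum fv.span_scale fv.span_base) simp
    finally show "z \<in> fv.span (delta ` P)" .
  qed
  have u: "(u1 :: _ \<Rightarrow> 'k) \<notin> Zb"
  proof
    assume "(u1 :: _ \<Rightarrow> 'k) \<in> Zb"
    then have "(u1 :: _ \<Rightarrow> 'k) (v1, []) = u1 (vn, [])" by (simp add: center_def Bset_def)
    then show False by (simp add: u1_v1 u1_vn)
  qed
  show ?thesis unfolding kdim_def
    by (rule dim_plus_one[OF vs_fun sub fin span u]) (simp add: Zc_decomp)
qed

end

theorem proposition6p7:
  fixes V :: "'v set" and Ar :: "'a set" and s t :: "'a \<Rightarrow> 'v"
    and R :: "'a list set" and v1 vn :: 'v
  assumes finV: "finite V" and finAr: "finite Ar"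
    and quiver: "\<forall>a\<in>Ar. s a \<in> V \<and> t a \<in> V"
    and rels: "\<forall>r\<in>R. 2 \<le> length r \<and> valid_path V Ar s t (s (hd r), r)"
    and admissible: "\<exists>N. \<forall>p. valid_path V Ar s t p \<and> N \<le> length (snd p) \<longrightarrow> (\<exists>r\<in>R. sublist r (snd p))"
    and v1: "v1 \<in> V" and vn: "vn \<in> V"
    and two_blocks: "(v1, vn) \<notin> qconn V Ar s t" "\<forall>w\<in>V. (v1, w) \<in> qconn V Ar s t \<or> (vn, w) \<in> qconn V Ar s t"
    and nonisol1: "\<exists>a\<in>Ar. s a = v1 \<or> t a = v1"
    and nonisoln: "\<exists>a\<in>Ar. s a = vn \<or> t a = vn"
  shows "let P = NP V Ar s t R;
             A = (algA P :: (('v \<times> 'a list) \<Rightarrow> 'k::field) set);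
             B = gen_subalg P t
                   ({\<lambda>p. vert_elt v1 p + vert_elt vn p} \<union> vert_elt ` (V - {v1, vn}) \<union> arrow_elt s ` Ar)
         in center P t B \<subseteq> center P t A
          \<and> jrad P t (center P t B) = jrad P t (center P t A)
          \<and> kdim (center P t A) = kdim (center P t B) + 1"
proof -
  interpret mq2 V Ar s t R v1 vn
    using finV finAr quiver rels admissible v1 vn two_blocks by unfold_locales auto
  have BE: "gen_subalg (NP V Ar s t R) t
                   ({\<lambda>p. vert_elt v1 p + vert_elt vn p} \<union> vert_elt ` (V - {v1, vn}) \<union> arrow_elt s ` Ar)
        = (Bset :: (('v \<times> 'a list) \<Rightarrow> 'k::field) set)"
    by (rule B_eq)
  show ?thesis
  proof -
    have 1: "(Zb :: (('v \<times> 'a list) \<Rightarrow> 'k) set) \<subseteq> Zc" by (rule Zb_sub)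
    have 2: "jrad P t (Zb :: (('v \<times> 'a list) \<Rightarrow> 'k) set) = jrad P t Zc" by (simp only: jrad_Zb jrad_Zc)
    have 3: "kdim (Zc :: (('v \<times> 'a list) \<Rightarrow> 'k) set) = kdim (Zb :: (('v \<times> 'a list) \<Rightarrow> 'k) set) + 1" by (rule kdim_eq)
    show ?thesis unfolding Let_def BE using 1 2 3 by blast
  qed
qed



end
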